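(* Let $P$ be an online minimization problem, let $p^r$ be an $r$-round input distribution with associated round cost functions $\mathrm{cost}_i$, and let $\mathrm{ALG}$ be a deterministic algorithm reading at most $b$ bits of advice on every input in the support of $p^r$. Assume there is a convex and decreasing function $f:[0,\infty]\to\mathbb{R}$ such that for every $1\leq i\leq r$ and every $w\in\mathcal{W}_i$, $$\mathbb{E}[\mathrm{cost}_i(\mathrm{ALG})\mid W_i=w]\geq f\big(D_{KL}(p_{i\mid w}\,\|\,p_i)\big).$$ Then $\mathbb{E}[\mathrm{cost}(\mathrm{ALG})]\geq r\,f(b/r)$.
   Context: For $P$-inputs $\sigma_1,\dots,\sigma_r$, $\sigma_1\cdots\sigma_r$ denotes the input with initial state of $\sigma_1$ and the requests of all $\sigma_i$ concatenated. An $r$-round input distribution: finite sets $I_1,\dots,I_r$ of $P$-inputs such that every $\sigma_1\cdots\sigma_r$ with $\sigma_i\in I_i$ is a valid $P$-input; $I^r$ is the set of all these; for each $i$ a round cost function $\mathrm{cost}_i$ mapping an output $\gamma$ for an input $\sigma\in I^r$ to a non-negative real; distributions $p_i$ on $I_i$ and the product distribution $p^r(\sigma_1\cdots\sigma_r)=\prod_ip_i(\sigma_i)$. With the input drawn from $p^r$: $X_i$ is the round-$i$ part $\sigma_i$; $B$ is the $b$-bit advice string that $\mathrm{ALG}$ receives at the start (the first $b$ bits of the oracle's tape for that input); $\mathrm{cost}_i(\mathrm{ALG})$ is $\mathrm{cost}_i$ of $\mathrm{ALG}$'s output, $\mathrm{cost}(\mathrm{ALG})=\sum_i\mathrm{cost}_i(\mathrm{ALG})$;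 $W_i=(X_1,\dots,X_{i-1},B)$ with $\mathcal{W}_i$ the set of its values of positive probability; $p_{i\mid w}(x)=\Pr[X_i=x\mid W_i=w]$. $D_{KL}(\mu\|\nu)=\sum_\omega\mu(\omega)\log_2(\mu(\omega)/\nu(\omega))$ (with $0\log0=0$). *)

theory Defs
  imports "HOL-Probability.Probability"
begin

text \<open>An r-round input
  sigma_1 ... sigma_r is represented by the list [sigma_1, ..., sigma_r]
  of its round parts (index i-1 holds round i); its i-th round part is drawn
  independently from p i.\<close>
fun rounds_pmf :: "(nat \<Rightarrow> 'a pmf) \<Rightarrow> nat \<Rightarrow> 'a list pmf" where
  "rounds_pmf p 0 = return_pmf []"
| "rounds_pmf p (Suc n) =
     bind_pmf (rounds_pmf p n) (\<lambda>xs. map_pmf (\<lambda>x. xs @ [x]) (p n))"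

text \<open>Kullback-Leibler divergence in bits, with the convention 0 log 0 = 0
  (terms with mu(omega) = 0 are omitted by summing over the support).\<close>
definition KL_div :: "'a pmf \<Rightarrow> 'a pmf \<Rightarrow> real" where
  "KL_div \<mu> \<nu> = (\<Sum>\<omega>\<in>set_pmf \<mu>. pmf \<mu> \<omega> * log 2 (pmf \<mu> \<omega> / pmf \<nu> \<omega>))"

definition advice :: "('i \<Rightarrow> nat \<Rightarrow> bool) \<Rightarrow> nat \<Rightarrow> 'i \<Rightarrow> bool list" where
  "advice tape b \<sigma> = map (tape \<sigma>) [0..<b]"

end

theory Submission
  imports Defs
begin


lemma rounds_Suc_pair:
  "rounds_pmf p (Suc n) = map_pmf (\<lambda>(xs,x). xs@[x]) (pair_pmf (rounds_pmf p n) (p n))"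
  by (simp add: pair_pmf_def map_bind_pmf map_pmf_def bind_assoc_pmf bind_return_pmf)

lemma rounds_set:
  "\<sigma> \<in> set_pmf (rounds_pmf p n) \<Longrightarrow> length \<sigma> = n \<and> (\<forall>i<n. \<sigma>!i \<in> set_pmf (p i))"
proof (induction n arbitrary: \<sigma>)
  case 0 then show ?case by simp
next
  case (Suc n)
  then obtain xs x where "\<sigma> = xs @ [x]" "xs \<in> set_pmf (rounds_pmf p n)" "x \<in> set_pmf (p n)"
    by auto
  with Suc.IH[of xs] show ?case by (auto simp: nth_append less_Suc_eq)
qed

lemma rounds_take:
  "i \<le> n \<Longrightarrow> map_pmf (take i) (rounds_pmf p n) = rounds_pmf p i"
proof (induction n)
  case 0 then show ?case by simp
next
  case (Suc n)
  show ?case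
  proof (cases "i = Suc n")
    case True
    then show ?thesis
    proof -
      have "map_pmf (take i) (rounds_pmf p (Suc n)) = map_pmf id (rounds_pmf p (Suc n))"
        using rounds_set[of _ p "Suc n"] True by (intro map_pmf_cong) auto
      then show ?thesis using True by simp
    qed
  next
    case False
    then have i: "i \<le> n" using Suc.prems by simp
    have "map_pmf (take i) (rounds_pmf p (Suc n)) =
        bind_pmf (rounds_pmf p n) (\<lambda>xs. map_pmf (\<lambda>x. take i (xs @ [x])) (p n))"
      by (simp add: map_bind_pmf pmf.map_comp o_def)
    also have "\<dots> = bind_pmf (rounds_pmf p n) (\<lambda>xs. return_pmf (take i xs))"
      using i by (intro bind_pmf_cong) (auto dest!: rounds_set simp: map_pmf_const)
    also have "\<dots> = map_pmf (take i) (rounds_pmf p n)"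
      by (simp add: map_pmf_def)
    finally show ?thesis using Suc.IH i by simp
  qed
qed

lemma rounds_pmf_snoc:
  "pmf (rounds_pmf p (Suc i)) (xs@[x]) = pmf (rounds_pmf p i) xs * pmf (p i) x"
proof -
  have "inj (\<lambda>(xs::'a list, x::'a). xs@[x])" by (auto simp: inj_def)
  then show ?thesis
    unfolding rounds_Suc_pair using pmf_map_inj'[of "\<lambda>(xs, x). xs@[x]" _ "(xs,x)"]
    by (simp add: pmf_pair)
qed

lemma rounds_finite:
  "(\<And>i. i < n \<Longrightarrow> finite (set_pmf (p i))) \<Longrightarrow> finite (set_pmf (rounds_pmf p n))"
proof -
  assume f: "\<And>i. i < n \<Longrightarrow> finite (set_pmf (p i))"
  have "set_pmf (rounds_pmf p n) \<subseteq> {xs. set xs \<subseteq> (\<Union>i<n. set_pmf (p i)) \<and> length xs = n}"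
    by (auto dest!: rounds_set simp: in_set_conv_nth) blast
  moreover have "finite {xs. set xs \<subseteq> (\<Union>i<n. set_pmf (p i)) \<and> length xs = n}"
    using f by (intro finite_lists_length_eq) auto
  ultimately show ?thesis by (rule finite_subset)
qed



lemma L_prob:
  assumes "finite (set_pmf P)"
  shows "measure_pmf.prob P A = (\<Sum>\<tau>\<in>set_pmf P \<inter> A. pmf P \<tau>)"
proof -
  have "measure_pmf.prob P A = measure_pmf.prob P (A \<inter> set_pmf P)"
    by (simp add: measure_Int_set_pmf)
  also have "\<dots> = (\<Sum>\<tau>\<in>A \<inter> set_pmf P. pmf P \<tau>)"
    using assms by (intro measure_measure_pmf_finite) auto
  finally show ?thesis by (simp add: Int_commute)
qed

lemma L_prob_cong:
  assumes "\<And>\<tau>. \<tau> \<in> set_pmf P \<Longrightarrow> \<tau> \<in> A \<longleftrightarrow> \<tau> \<in> B"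
  shows "measure_pmf.prob P A = measure_pmf.prob P B"
proof -
  have "A \<inter> set_pmf P = B \<inter> set_pmf P" using assms by auto
  then show ?thesis by (metis measure_Int_set_pmf)
qed

lemma L_exp:
  assumes "finite (set_pmf P)"
  shows "measure_pmf.expectation P g = (\<Sum>\<sigma>\<in>set_pmf P. pmf P \<sigma> * g \<sigma>)"
  using assms by (subst integral_measure_pmf_real[where A="set_pmf P"]) (auto simp: mult.commute)

lemma L_cond_exp:
  assumes fin: "finite (set_pmf P)" and w: "w \<in> V ` set_pmf P"
  shows "measure_pmf.prob P {\<tau>. V \<tau> = w} * measure_pmf.expectation (cond_pmf P {\<tau>. V \<tau> = w}) g
     = (\<Sum>\<sigma>\<in>{\<sigma>\<in>set_pmf P. V \<sigma> = w}. pmf P \<sigma> * g \<sigma>)"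
proof -
  let ?C = "cond_pmf P {\<tau>. V \<tau> = w}"
  have ne: "set_pmf P \<inter> {\<tau>. V \<tau> = w} \<noteq> {}" using w by auto
  have pos: "measure_pmf.prob P {\<tau>. V \<tau> = w} > 0"
    using w by (auto intro: measure_pmf_posI)
  have sc: "set_pmf ?C = set_pmf P \<inter> {\<tau>. V \<tau> = w}" using ne by simp
  have "measure_pmf.expectation ?C g = (\<Sum>\<sigma>\<in>set_pmf ?C. pmf ?C \<sigma> * g \<sigma>)"
    using fin sc by (intro L_exp) simp
  also have "\<dots> = (\<Sum>\<sigma>\<in>{\<sigma>\<in>set_pmf P. V \<sigma> = w}. pmf P \<sigma> * g \<sigma> / measure_pmf.prob P {\<tau>. V \<tau> = w})"
    using sc ne by (intro sum.cong) (auto simp: pmf_cond)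
  finally show ?thesis using pos
    by (simp add: sum_divide_distrib[symmetric])
qed

lemma L_sum_prob:
  assumes fin: "finite (set_pmf P)"
  shows "(\<Sum>w\<in>V ` set_pmf P. measure_pmf.prob P {\<tau>. V \<tau> = w}) = 1"
proof -
  have "(\<Sum>w\<in>V ` set_pmf P. measure_pmf.prob P {\<tau>. V \<tau> = w})
      = (\<Sum>w\<in>V ` set_pmf P. \<Sum>\<sigma>\<in>{\<sigma>\<in>set_pmf P. V \<sigma> = w}. pmf P \<sigma>)"
    using fin by (intro sum.cong refl) (simp add: L_prob Int_def)
  also have "\<dots> = (\<Sum>\<sigma>\<in>set_pmf P. pmf P \<sigma>)"
    using fin by (intro sum.group) auto
  also have "\<dots> = 1" using fin by (intro sum_pmf_eq_1) auto
  finally show ?thesis .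
qed

lemma L_total:
  assumes fin: "finite (set_pmf P)"
  shows "measure_pmf.expectation P g = (\<Sum>w\<in>V ` set_pmf P.
      measure_pmf.prob P {\<tau>. V \<tau> = w} * measure_pmf.expectation (cond_pmf P {\<tau>. V \<tau> = w}) g)"
proof -
  have "(\<Sum>w\<in>V ` set_pmf P.
      measure_pmf.prob P {\<tau>. V \<tau> = w} * measure_pmf.expectation (cond_pmf P {\<tau>. V \<tau> = w}) g)
    = (\<Sum>w\<in>V ` set_pmf P. \<Sum>\<sigma>\<in>{\<sigma>\<in>set_pmf P. V \<sigma> = w}. pmf P \<sigma> * g \<sigma>)"
    using fin by (intro sum.cong refl L_cond_exp)
  also have "\<dots> = (\<Sum>\<sigma>\<in>set_pmf P. pmf P \<sigma> * g \<sigma>)"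
    using fin by (intro sum.group) auto
  finally show ?thesis using fin by (simp add: L_exp)
qed

lemma L_gibbs:
  assumes fin: "finite (set_pmf \<mu>)" and sub: "set_pmf \<mu> \<subseteq> set_pmf \<nu>"
  shows "KL_div \<mu> \<nu> \<ge> 0"
proof -
  have "(\<Sum>\<omega>\<in>set_pmf \<mu>. pmf \<mu> \<omega> * ln (pmf \<nu> \<omega> / pmf \<mu> \<omega>))
      \<le> (\<Sum>\<omega>\<in>set_pmf \<mu>. pmf \<mu> \<omega> * (pmf \<nu> \<omega> / pmf \<mu> \<omega> - 1))"
  proof (intro sum_mono mult_left_mono ln_le_minus_one)
    fix \<omega> assume "\<omega> \<in> set_pmf \<mu>"
    then show "0 < pmf \<nu> \<omega> / pmf \<mu> \<omega>" using sub by (auto simp: pmf_positive)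
  qed simp
  also have "\<dots> = (\<Sum>\<omega>\<in>set_pmf \<mu>. pmf \<nu> \<omega>) - (\<Sum>\<omega>\<in>set_pmf \<mu>. pmf \<mu> \<omega>)"
    by (simp add: sum_subtractf[symmetric] right_diff_distrib set_pmf_eq)
  also have "\<dots> \<le> 0"
  proof -
    have "(\<Sum>\<omega>\<in>set_pmf \<mu>. pmf \<nu> \<omega>) = measure_pmf.prob \<nu> (set_pmf \<mu>)"
      using fin by (simp add: measure_measure_pmf_finite)
    also have "\<dots> \<le> 1" by simp
    finally show ?thesis using sum_pmf_eq_1[OF fin order_refl] by simp
  qed
  finally have "(\<Sum>\<omega>\<in>set_pmf \<mu>. pmf \<mu> \<omega> * ln (pmf \<nu> \<omega> / pmf \<mu> \<omega>)) \<le> 0" .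
  moreover have "(\<Sum>\<omega>\<in>set_pmf \<mu>. pmf \<mu> \<omega> * ln (pmf \<nu> \<omega> / pmf \<mu> \<omega>))
     = - (ln 2 * KL_div \<mu> \<nu>)"
    unfolding KL_div_def sum_distrib_left sum_negf[symmetric]
  proof (intro sum.cong refl)
    fix \<omega> assume "\<omega> \<in> set_pmf \<mu>"
    then have "pmf \<mu> \<omega> > 0" "pmf \<nu> \<omega> > 0" using sub by (auto simp: pmf_positive)
    then show "pmf \<mu> \<omega> * ln (pmf \<nu> \<omega> / pmf \<mu> \<omega>) =
      - (ln 2 * (pmf \<mu> \<omega> * log 2 (pmf \<mu> \<omega> / pmf \<nu> \<omega>)))"
      by (simp add: log_def ln_div field_simps)
  qed
  ultimately show ?thesis by (simp add: zero_le_mult_iff)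
qed


lemma L_cond_prob:
  assumes fin: "finite (set_pmf P)" and w: "w \<in> V ` set_pmf P"
  shows "measure_pmf.prob (cond_pmf P {\<tau>. V \<tau> = w}) B
     = measure_pmf.prob P ({\<tau>. V \<tau> = w} \<inter> B) / measure_pmf.prob P {\<tau>. V \<tau> = w}"
proof -
  let ?C = "cond_pmf P {\<tau>. V \<tau> = w}"
  have ne: "set_pmf P \<inter> {\<tau>. V \<tau> = w} \<noteq> {}" using w by auto
  have sc: "set_pmf ?C = set_pmf P \<inter> {\<tau>. V \<tau> = w}" using ne by simp
  have "measure_pmf.prob ?C B = (\<Sum>\<tau>\<in>set_pmf ?C \<inter> B. pmf ?C \<tau>)"
    using fin sc by (intro L_prob) simp
  also have "\<dots> = (\<Sum>\<tau>\<in>set_pmf P \<inter> ({\<tau>. V \<tau> = w} \<inter> B). pmf P \<tau> / measure_pmf.prob P {\<tau>. V \<tau> = w})"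
    using sc ne by (intro sum.cong) (auto simp: pmf_cond)
  also have "\<dots> = measure_pmf.prob P ({\<tau>. V \<tau> = w} \<inter> B) / measure_pmf.prob P {\<tau>. V \<tau> = w}"
    using fin by (simp add: sum_divide_distrib[symmetric] L_prob)
  finally show ?thesis .
qed

lemma L_avgKL:
  assumes fin: "finite (set_pmf P)"
  shows "(\<Sum>w\<in>V ` set_pmf P. measure_pmf.prob P {\<tau>. V \<tau> = w} *
           KL_div (map_pmf X (cond_pmf P {\<tau>. V \<tau> = w})) q)
   = (\<Sum>\<sigma>\<in>set_pmf P. pmf P \<sigma> * log 2 (measure_pmf.prob P {\<tau>. V \<tau> = V \<sigma> \<and> X \<tau> = X \<sigma>}
          / (measure_pmf.prob P {\<tau>. V \<tau> = V \<sigma>} * pmf q (X \<sigma>))))"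
proof -
  define L where "L = (\<lambda>w x. log 2 (measure_pmf.prob P {\<tau>. V \<tau> = w \<and> X \<tau> = x}
          / (measure_pmf.prob P {\<tau>. V \<tau> = w} * pmf q x)))"
  have step: "measure_pmf.prob P {\<tau>. V \<tau> = w} * KL_div (map_pmf X (cond_pmf P {\<tau>. V \<tau> = w})) q
     = (\<Sum>\<sigma>\<in>{\<sigma>\<in>set_pmf P. V \<sigma> = w}. pmf P \<sigma> * L (V \<sigma>) (X \<sigma>))"
    if w: "w \<in> V ` set_pmf P" for w
  proof -
    let ?C = "cond_pmf P {\<tau>. V \<tau> = w}"
    let ?S = "{\<sigma>\<in>set_pmf P. V \<sigma> = w}"
    have ne: "set_pmf P \<inter> {\<tau>. V \<tau> = w} \<noteq> {}" using w by auto
    have pos: "measure_pmf.prob P {\<tau>. V \<tau> = w} > 0"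
      using w by (auto intro: measure_pmf_posI)
    have fS: "finite ?S" using fin by simp
    have sm: "set_pmf (map_pmf X ?C) = X ` ?S" using ne by auto
    have pm: "pmf (map_pmf X ?C) x = measure_pmf.prob P {\<tau>. V \<tau> = w \<and> X \<tau> = x} / measure_pmf.prob P {\<tau>. V \<tau> = w}" for x
      unfolding pmf_map using L_cond_prob[OF fin w, of "X -` {x}"]
      by (simp add: Int_def conj_commute)
    have pw: "measure_pmf.prob P {\<tau>. V \<tau> = w \<and> X \<tau> = x} = (\<Sum>\<sigma>\<in>{\<sigma>\<in>?S. X \<sigma> = x}. pmf P \<sigma>)" for x
      using fin by (simp add: L_prob Int_def)
    have "measure_pmf.prob P {\<tau>. V \<tau> = w} * KL_div (map_pmf X ?C) q
       = (\<Sum>x\<in>X ` ?S. measure_pmf.prob P {\<tau>. V \<tau> = w \<and> X \<tau> = x} * L w x)"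
      unfolding KL_div_def sm sum_distrib_left
      using pos by (intro sum.cong refl) (simp add: pm L_def field_simps)
    also have "\<dots> = (\<Sum>x\<in>X ` ?S. \<Sum>\<sigma>\<in>{\<sigma>\<in>?S. X \<sigma> = x}. pmf P \<sigma> * L (V \<sigma>) (X \<sigma>))"
      unfolding pw sum_distrib_right by (intro sum.cong refl) auto
    also have "\<dots> = (\<Sum>\<sigma>\<in>?S. pmf P \<sigma> * L (V \<sigma>) (X \<sigma>))"
      using fS by (intro sum.group) auto
    finally show ?thesis .
  qed
  have "(\<Sum>w\<in>V ` set_pmf P. measure_pmf.prob P {\<tau>. V \<tau> = w} *
           KL_div (map_pmf X (cond_pmf P {\<tau>. V \<tau> = w})) q)
     = (\<Sum>w\<in>V ` set_pmf P. \<Sum>\<sigma>\<in>{\<sigma>\<in>set_pmf P. V \<sigma> = w}. pmf P \<sigma> * L (V \<sigma>) (X \<sigma>))"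
    by (intro sum.cong refl step)
  also have "\<dots> = (\<Sum>\<sigma>\<in>set_pmf P. pmf P \<sigma> * L (V \<sigma>) (X \<sigma>))"
    using fin by (intro sum.group) auto
  finally show ?thesis by (simp add: L_def)
qed

lemma L_ent:
  assumes fin: "finite (set_pmf P)" and A: "finite A" "V ` set_pmf P \<subseteq> A"
  shows "(\<Sum>\<sigma>\<in>set_pmf P. pmf P \<sigma> * log 2 (measure_pmf.prob P {\<tau>. V \<tau> = V \<sigma>})) \<ge> - log 2 (card A)"
proof -
  define N where "N = real (card A)"
  define Q where "Q = (\<lambda>\<sigma>. measure_pmf.prob P {\<tau>. V \<tau> = V \<sigma>})"
  have Qpos: "Q \<sigma> > 0" if "\<sigma> \<in> set_pmf P" for \<sigma>
    unfolding Q_def using that by (auto intro: measure_pmf_posI)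
  have ne: "set_pmf P \<noteq> {}" by (rule set_pmf_not_empty)
  then have Npos: "N > 0" using A by (auto simp: N_def card_gt_0_iff)
  have sum1: "(\<Sum>\<sigma>\<in>set_pmf P. pmf P \<sigma>) = 1" using fin by (intro sum_pmf_eq_1) auto
  have "(\<Sum>\<sigma>\<in>set_pmf P. pmf P \<sigma> / Q \<sigma>)
     = (\<Sum>w\<in>V ` set_pmf P. \<Sum>\<sigma>\<in>{\<sigma>\<in>set_pmf P. V \<sigma> = w}. pmf P \<sigma> / Q \<sigma>)"
    using fin by (intro sum.group[symmetric]) auto
  also have "\<dots> = (\<Sum>w\<in>V ` set_pmf P. 1)"
  proof (intro sum.cong refl)
    fix w assume w: "w \<in> V ` set_pmf P"
    have pos: "measure_pmf.prob P {\<tau>. V \<tau> = w} > 0"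
      using w by (auto intro: measure_pmf_posI)
    have "(\<Sum>\<sigma>\<in>{\<sigma>\<in>set_pmf P. V \<sigma> = w}. pmf P \<sigma> / Q \<sigma>)
        = (\<Sum>\<sigma>\<in>{\<sigma>\<in>set_pmf P. V \<sigma> = w}. pmf P \<sigma>) / measure_pmf.prob P {\<tau>. V \<tau> = w}"
      by (simp add: sum_divide_distrib Q_def)
    also have "(\<Sum>\<sigma>\<in>{\<sigma>\<in>set_pmf P. V \<sigma> = w}. pmf P \<sigma>) = measure_pmf.prob P {\<tau>. V \<tau> = w}"
      using fin by (simp add: L_prob Int_def)
    finally show "(\<Sum>\<sigma>\<in>{\<sigma>\<in>set_pmf P. V \<sigma> = w}. pmf P \<sigma> / Q \<sigma>) = 1" using pos by simp
  qed
  also have "\<dots> = real (card (V ` set_pmf P))" by simp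
  also have "\<dots> \<le> N" unfolding N_def using A by (intro of_nat_mono card_mono) auto
  finally have sQ: "(\<Sum>\<sigma>\<in>set_pmf P. pmf P \<sigma> / Q \<sigma>) \<le> N" .
  have "(\<Sum>\<sigma>\<in>set_pmf P. pmf P \<sigma> * ln (1 / (N * Q \<sigma>)))
      \<le> (\<Sum>\<sigma>\<in>set_pmf P. pmf P \<sigma> * (1 / (N * Q \<sigma>) - 1))"
    using Qpos Npos by (intro sum_mono mult_left_mono ln_le_minus_one) auto
  also have "\<dots> = (\<Sum>\<sigma>\<in>set_pmf P. pmf P \<sigma> / Q \<sigma>) / N - 1"
    using sum1 by (simp add: right_diff_distrib sum_subtractf sum_divide_distrib mult.commute)
  also have "\<dots> \<le> 0" using sQ Npos by (simp add: field_simps)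
  finally have le: "(\<Sum>\<sigma>\<in>set_pmf P. pmf P \<sigma> * ln (1 / (N * Q \<sigma>))) \<le> 0" .
  have "(\<Sum>\<sigma>\<in>set_pmf P. pmf P \<sigma> * ln (1 / (N * Q \<sigma>)))
      = - ln N - (\<Sum>\<sigma>\<in>set_pmf P. pmf P \<sigma> * ln (Q \<sigma>))"
  proof -
    have "(\<Sum>\<sigma>\<in>set_pmf P. pmf P \<sigma> * ln (1 / (N * Q \<sigma>)))
        = (\<Sum>\<sigma>\<in>set_pmf P. - (pmf P \<sigma> * ln N) - pmf P \<sigma> * ln (Q \<sigma>))"
    proof (intro sum.cong refl)
      fix \<sigma> assume "\<sigma> \<in> set_pmf P"
      then have "Q \<sigma> > 0" by (rule Qpos)
      then show "pmf P \<sigma> * ln (1 / (N * Q \<sigma>)) = - (pmf P \<sigma> * ln N) - pmf P \<sigma> * ln (Q \<sigma>)"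
        using Npos by (simp add: ln_div ln_mult algebra_simps)
    qed
    also have "\<dots> = - ln N - (\<Sum>\<sigma>\<in>set_pmf P. pmf P \<sigma> * ln (Q \<sigma>))"
      by (simp add: sum_subtractf sum_negf sum_distrib_right[symmetric] sum1)
    finally show ?thesis .
  qed
  with le have "- ln N \<le> (\<Sum>\<sigma>\<in>set_pmf P. pmf P \<sigma> * ln (Q \<sigma>))" by simp
  then have "- ln N / ln 2 \<le> (\<Sum>\<sigma>\<in>set_pmf P. pmf P \<sigma> * ln (Q \<sigma>)) / ln 2"
    by (intro divide_right_mono) auto
  then show ?thesis
    by (simp add: log_def N_def Q_def sum_divide_distrib)
qed



theorem theorem7:
  fixes r b :: nat
    and I :: "nat \<Rightarrow> 'a set"
    and p :: "nat \<Rightarrow> 'a pmf"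
    and tape :: "'a list \<Rightarrow> nat \<Rightarrow> bool"
    and ALG :: "'a list \<Rightarrow> bool list \<Rightarrow> 'o"
    and cost :: "nat \<Rightarrow> 'o \<Rightarrow> 'a list \<Rightarrow> real"
    and f :: "real \<Rightarrow> real"
  defines "P \<equiv> rounds_pmf p r"
    and "costALG \<equiv> (\<lambda>i \<sigma>. cost i (ALG \<sigma> (advice tape b \<sigma>)) \<sigma>)"
    and "W \<equiv> (\<lambda>i \<sigma>. (take i \<sigma>, advice tape b \<sigma>))"
  assumes I_finite: "\<And>i. i < r \<Longrightarrow> finite (I i)"
    and p_on_I: "\<And>i. i < r \<Longrightarrow> set_pmf (p i) \<subseteq> I i"
    and cost_nonneg: "\<And>i \<gamma> \<sigma>. i < r \<Longrightarrow> cost i \<gamma> \<sigma> \<ge> 0"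
    and f_convex: "convex_on {0..} f"
    and f_decreasing: "\<And>x y. 0 \<le> x \<Longrightarrow> x \<le> y \<Longrightarrow> f y \<le> f x"
    and round_bound:
      "\<And>i w. i < r \<Longrightarrow> w \<in> W i ` set_pmf P \<Longrightarrow>
         measure_pmf.expectation (cond_pmf P {\<sigma>. W i \<sigma> = w}) (costALG i)
           \<ge> f (KL_div (map_pmf (\<lambda>\<sigma>. \<sigma> ! i) (cond_pmf P {\<sigma>. W i \<sigma> = w})) (p i))"
  shows "measure_pmf.expectation P (\<lambda>\<sigma>. \<Sum>i<r. costALG i \<sigma>) \<ge> real r * f (real b / real r)"
  proof -
  let ?S = "set_pmf P"
  define adv where "adv = advice tape b"
  have fin: "finite ?S"
    unfolding P_def using I_finite p_on_I
    by (intro rounds_finite) (blast intro: finite_subset)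
  have Sset: "length \<sigma> = r \<and> (\<forall>i<r. \<sigma>!i \<in> set_pmf (p i))" if "\<sigma> \<in> ?S" for \<sigma>
    using that unfolding P_def by (rule rounds_set)
  have Wd: "W i \<sigma> = (take i \<sigma>, adv \<sigma>)" for i \<sigma> by (simp add: W_def adv_def)
  have ptake: "measure_pmf.prob P {\<tau>. take i \<tau> = take i \<sigma>} = pmf (rounds_pmf p i) (take i \<sigma>)"
    if "i \<le> r" for i \<sigma>
  proof -
    have "pmf (rounds_pmf p i) (take i \<sigma>) = pmf (map_pmf (take i) P) (take i \<sigma>)"
      unfolding P_def by (simp only: rounds_take[OF that])
    also have "\<dots> = measure_pmf.prob P {\<tau>. take i \<tau> = take i \<sigma>}"
      by (simp add: pmf_map vimage_def)
    finally show ?thesis by simp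
  qed
  define h where "h = (\<lambda>i. \<Sum>\<sigma>\<in>?S. pmf P \<sigma> * log 2 (measure_pmf.prob P {\<tau>. W i \<tau> = W i \<sigma>}
        / measure_pmf.prob P {\<tau>. take i \<tau> = take i \<sigma>}))"
  define K where "K = (\<lambda>i. \<Sum>w\<in>W i ` ?S. measure_pmf.prob P {\<tau>. W i \<tau> = w} *
        KL_div (map_pmf (\<lambda>\<sigma>. \<sigma> ! i) (cond_pmf P {\<tau>. W i \<tau> = w})) (p i))"
  have KLnn: "KL_div (map_pmf (\<lambda>\<sigma>. \<sigma> ! i) (cond_pmf P {\<tau>. W i \<tau> = w})) (p i) \<ge> 0"
    if i: "i < r" and w: "w \<in> W i ` ?S" for i w
  proof (rule L_gibbs)
    have ne: "set_pmf P \<inter> {\<tau>. W i \<tau> = w} \<noteq> {}" using w by auto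
    then have e: "set_pmf (map_pmf (\<lambda>\<sigma>. \<sigma> ! i) (cond_pmf P {\<tau>. W i \<tau> = w}))
        = (\<lambda>\<sigma>. \<sigma> ! i) ` (?S \<inter> {\<tau>. W i \<tau> = w})" by simp
    show "finite (set_pmf (map_pmf (\<lambda>\<sigma>. \<sigma> ! i) (cond_pmf P {\<tau>. W i \<tau> = w})))"
      unfolding e using fin by simp
    show "set_pmf (map_pmf (\<lambda>\<sigma>. \<sigma> ! i) (cond_pmf P {\<tau>. W i \<tau> = w})) \<subseteq> set_pmf (p i)"
      unfolding e using Sset i by auto
  qed
  have Knn: "K i \<ge> 0" if i: "i < r" for i
    unfolding K_def using KLnn[OF i] by (intro sum_nonneg mult_nonneg_nonneg) auto
  have Kge: "measure_pmf.expectation P (costALG i) \<ge> f (K i)" if i: "i < r" for i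
  proof -
    have "measure_pmf.expectation P (costALG i) = (\<Sum>w\<in>W i ` ?S.
      measure_pmf.prob P {\<tau>. W i \<tau> = w} * measure_pmf.expectation (cond_pmf P {\<tau>. W i \<tau> = w}) (costALG i))"
      using fin by (rule L_total)
    also have "\<dots> \<ge> (\<Sum>w\<in>W i ` ?S. measure_pmf.prob P {\<tau>. W i \<tau> = w} *
        f (KL_div (map_pmf (\<lambda>\<sigma>. \<sigma> ! i) (cond_pmf P {\<tau>. W i \<tau> = w})) (p i)))"
      using round_bound[OF i] by (intro sum_mono mult_left_mono) auto
    also have "(\<Sum>w\<in>W i ` ?S. measure_pmf.prob P {\<tau>. W i \<tau> = w} *
        f (KL_div (map_pmf (\<lambda>\<sigma>. \<sigma> ! i) (cond_pmf P {\<tau>. W i \<tau> = w})) (p i))) \<ge> f (K i)"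
    proof -
      have "f (\<Sum>w\<in>W i ` ?S. measure_pmf.prob P {\<tau>. W i \<tau> = w} *\<^sub>R
        KL_div (map_pmf (\<lambda>\<sigma>. \<sigma> ! i) (cond_pmf P {\<tau>. W i \<tau> = w})) (p i))
        \<le> (\<Sum>w\<in>W i ` ?S. measure_pmf.prob P {\<tau>. W i \<tau> = w} *
        f (KL_div (map_pmf (\<lambda>\<sigma>. \<sigma> ! i) (cond_pmf P {\<tau>. W i \<tau> = w})) (p i)))"
        using fin KLnn[OF i] L_sum_prob[OF fin, of "W i"]
        by (intro convex_on_sum[OF _ _ f_convex]) (auto simp: set_pmf_not_empty)
      then show ?thesis unfolding K_def by simp
    qed
    finally show ?thesis .
  qed
  have Keq: "K i = h (Suc i) - h i" if i: "i < r" for i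
  proof -
    have "K i = (\<Sum>\<sigma>\<in>?S. pmf P \<sigma> * log 2 (measure_pmf.prob P {\<tau>. W i \<tau> = W i \<sigma> \<and> \<tau>!i = \<sigma>!i}
          / (measure_pmf.prob P {\<tau>. W i \<tau> = W i \<sigma>} * pmf (p i) (\<sigma>!i))))"
      unfolding K_def using fin by (rule L_avgKL)
    also have "\<dots> = (\<Sum>\<sigma>\<in>?S. pmf P \<sigma> * log 2 (measure_pmf.prob P {\<tau>. W (Suc i) \<tau> = W (Suc i) \<sigma>}
        / measure_pmf.prob P {\<tau>. take (Suc i) \<tau> = take (Suc i) \<sigma>})
      - pmf P \<sigma> * log 2 (measure_pmf.prob P {\<tau>. W i \<tau> = W i \<sigma>}
        / measure_pmf.prob P {\<tau>. take i \<tau> = take i \<sigma>}))"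
    proof (intro sum.cong refl)
      fix \<sigma> assume s: "\<sigma> \<in> ?S"
      have tk: "take (Suc i) \<tau> = take i \<tau> @ [\<tau>!i]" if "\<tau> \<in> ?S" for \<tau>
        using Sset[OF that] i by (simp add: take_Suc_conv_app_nth)
      have a: "measure_pmf.prob P {\<tau>. W i \<tau> = W i \<sigma> \<and> \<tau>!i = \<sigma>!i}
           = measure_pmf.prob P {\<tau>. W (Suc i) \<tau> = W (Suc i) \<sigma>}"
        by (rule L_prob_cong) (auto simp: Wd tk s)
      have bb: "measure_pmf.prob P {\<tau>. take (Suc i) \<tau> = take (Suc i) \<sigma>}
           = measure_pmf.prob P {\<tau>. take i \<tau> = take i \<sigma>} * pmf (p i) (\<sigma>!i)"
        using i ptake[of "Suc i" \<sigma>] ptake[of i \<sigma>] by (simp add: tk[OF s] rounds_pmf_snoc del: rounds_pmf.simps)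
      have p1: "measure_pmf.prob P {\<tau>. W (Suc i) \<tau> = W (Suc i) \<sigma>} > 0"
        using s by (auto intro: measure_pmf_posI)
      have p2: "measure_pmf.prob P {\<tau>. W i \<tau> = W i \<sigma>} > 0"
        using s by (auto intro: measure_pmf_posI)
      have p3: "measure_pmf.prob P {\<tau>. take i \<tau> = take i \<sigma>} > 0"
        using s by (auto intro: measure_pmf_posI)
      have p4: "pmf (p i) (\<sigma>!i) > 0" using Sset[OF s] i by (simp add: pmf_positive)
      show "pmf P \<sigma> * log 2 (measure_pmf.prob P {\<tau>. W i \<tau> = W i \<sigma> \<and> \<tau>!i = \<sigma>!i}
          / (measure_pmf.prob P {\<tau>. W i \<tau> = W i \<sigma>} * pmf (p i) (\<sigma>!i))) =
        pmf P \<sigma> * log 2 (measure_pmf.prob P {\<tau>. W (Suc i) \<tau> = W (Suc i) \<sigma>}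
        / measure_pmf.prob P {\<tau>. take (Suc i) \<tau> = take (Suc i) \<sigma>})
      - pmf P \<sigma> * log 2 (measure_pmf.prob P {\<tau>. W i \<tau> = W i \<sigma>}
        / measure_pmf.prob P {\<tau>. take i \<tau> = take i \<sigma>})"
        unfolding a bb using p1 p2 p3 p4
        by (simp add: log_divide log_mult algebra_simps)
    qed
    also have "\<dots> = h (Suc i) - h i" unfolding h_def by (simp add: sum_subtractf)
    finally show ?thesis .
  qed
  have hr: "h r = 0"
    unfolding h_def
  proof (intro sum.neutral ballI)
    fix \<sigma> assume s: "\<sigma> \<in> ?S"
    have "measure_pmf.prob P {\<tau>. W r \<tau> = W r \<sigma>} = measure_pmf.prob P {\<tau>. take r \<tau> = take r \<sigma>}"
      using Sset[OF s] by (intro L_prob_cong) (auto simp: Wd dest!: Sset)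
    moreover have "measure_pmf.prob P {\<tau>. take r \<tau> = take r \<sigma>} > 0"
      using s by (auto intro: measure_pmf_posI)
    ultimately show "pmf P \<sigma> * log 2 (measure_pmf.prob P {\<tau>. W r \<tau> = W r \<sigma>}
        / measure_pmf.prob P {\<tau>. take r \<tau> = take r \<sigma>}) = 0" by simp
  qed
  have h0: "h 0 \<ge> - real b"
  proof -
    have "h 0 = (\<Sum>\<sigma>\<in>?S. pmf P \<sigma> * log 2 (measure_pmf.prob P {\<tau>. adv \<tau> = adv \<sigma>}))"
      unfolding h_def by (simp add: Wd)
    moreover have "(\<Sum>\<sigma>\<in>?S. pmf P \<sigma> * log 2 (measure_pmf.prob P {\<tau>. adv \<tau> = adv \<sigma>}))
       \<ge> - log 2 (card {xs::bool list. set xs \<subseteq> UNIV \<and> length xs = b})"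
      using fin finite_lists_length_eq[of "UNIV::bool set" b] by (intro L_ent) (auto simp: adv_def advice_def)
    moreover have "card {xs::bool list. set xs \<subseteq> UNIV \<and> length xs = b} = 2 ^ b"
      using card_lists_length_eq[of "UNIV::bool set" b] by simp
    ultimately show ?thesis by (simp add: log_nat_power)
  qed
  have sumK: "(\<Sum>i<r. K i) \<le> real b"
  proof -
    have "(\<Sum>i<r. K i) = (\<Sum>i<r. h (Suc i) - h i)" by (intro sum.cong) (auto simp: Keq)
    also have "\<dots> = h r - h 0" by (rule sum_lessThan_telescope)
    finally show ?thesis using hr h0 by simp
  qed
  have "measure_pmf.expectation P (\<lambda>\<sigma>. \<Sum>i<r. costALG i \<sigma>) = (\<Sum>i<r. measure_pmf.expectation P (costALG i))"
    using fin by (intro Bochner_Integration.integral_sum integrable_measure_pmf_finite)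
  also have "\<dots> \<ge> (\<Sum>i<r. f (K i))" using Kge by (intro sum_mono) auto
  finally have E: "measure_pmf.expectation P (\<lambda>\<sigma>. \<Sum>i<r. costALG i \<sigma>) \<ge> (\<Sum>i<r. f (K i))" .
  show ?thesis
  proof (cases "r = 0")
    case True then show ?thesis using E by simp
  next
    case False
    then have rpos: "real r > 0" by simp
    have "f (\<Sum>i<r. (1 / real r) *\<^sub>R K i) \<le> (\<Sum>i<r. (1 / real r) * f (K i))"
      using False Knn by (intro convex_on_sum[OF _ _ f_convex]) auto
    then have J: "f ((\<Sum>i<r. K i) / real r) \<le> (\<Sum>i<r. f (K i)) / real r"
      by (simp add: sum_divide_distrib[symmetric] sum_distrib_left[symmetric])
    have "f (real b / real r) \<le> f ((\<Sum>i<r. K i) / real r)"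
      using Knn sumK rpos by (intro f_decreasing divide_nonneg_pos divide_right_mono sum_nonneg) auto
    with J have "f (real b / real r) \<le> (\<Sum>i<r. f (K i)) / real r" by linarith
    then have "real r * f (real b / real r) \<le> (\<Sum>i<r. f (K i))"
      using rpos by (simp add: field_simps)
    with E show ?thesis by linarith
  qed
qed

end
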